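(* For $n\ge1$ let \[ \mathbf{M}_n=\begin{bmatrix} \frac{n}{2(2n+1)} & -\frac{3}{2n(2n+1)} & 0 & \frac{3}{2n^{5}}\\ 0 & \frac{n}{2(2n+1)} & -\frac{3}{2n(2n+1)} & \frac{3}{2n^{3}}\\ 0 & 0 & \frac{n}{2(2n+1)} & \frac{3}{2n}\\ 0 & 0 & 0 & 1 \end{bmatrix}. \] Then $\lim_{N\to\infty}\mathbf{M}_1\cdots\mathbf{M}_N$ exists and equals \[ \begin{bmatrix}0&0&0&\zeta(6)+\delta\\0&0&0&\zeta(4)\\0&0&0&\zeta(2)\\0&0&0&1\end{bmatrix},\qquad \delta=9\sum_{n\ge1}\frac{H_{n-1}^{(4)}}{\binom{2n}{n}n^{2}}\ (\approx 0.438668). \] In particular, since $\delta>0$, the identity asserting that this limit equals the matrix with last column $(\zeta(6),\zeta(4),\zeta(2),1)^t$ and all other entries zero is false.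
   Context: $\zeta$ denotes the Riemann zeta function. For integers $n\ge0$ and $p\ge1$, $H_n^{(p)}=\sum_{k=1}^{n}k^{-p}$ (so $H_0^{(p)}=0$). *)

theory Defs
  imports "HOL-Analysis.Analysis"
begin

definition zeta_nat :: "nat \<Rightarrow> real" where
  "zeta_nat s = (\<Sum>k. 1 / (real (k + 1)) ^ s)"

definition Hp :: "nat \<Rightarrow> nat \<Rightarrow> real" where
  "Hp p n = (\<Sum>k=1..n. 1 / (real k) ^ p)"

definition Mmat :: "nat \<Rightarrow> real^4^4" where
  "Mmat n = (let a = real n / (2 * (2 * real n + 1));
                 b = - 3 / (2 * real n * (2 * real n + 1)) in
     vector [vector [a, b, 0, 3 / (2 * real n ^ 5)],
             vector [0, a, b, 3 / (2 * real n ^ 3)],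
             vector [0, 0, a, 3 / (2 * real n)],
             vector [0, 0, 0, 1]])"

fun Mprod :: "nat \<Rightarrow> real^4^4" where
  "Mprod 0 = mat 1"
| "Mprod (Suc N) = Mprod N ** Mmat (Suc N)"

definition delta_term :: "nat \<Rightarrow> real" where
  "delta_term n = Hp 4 (n - 1) / (real ((2 * n) choose n) * (real n)^2)"

definition delta :: real where
  "delta = 9 * (\<Sum>n. delta_term (n + 1))"

end

theory Submission
  imports Defs "HOL-Real_Asymp.Real_Asymp"
begin

datatype tr = T (t0: real) (t1: real) (t2: real)

instantiation tr :: comm_ring_1
begin
definition "0 = T 0 0 0"
definition "1 = T 1 0 0"
definition "x + y = T (t0 x + t0 y) (t1 x + t1 y) (t2 x + t2 y)"
definition "- x = T (- t0 x) (- t1 x) (- t2 x)"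
definition "x - y = T (t0 x - t0 y) (t1 x - t1 y) (t2 x - t2 y)"
definition "x * y = T (t0 x * t0 y) (t0 x * t1 y + t1 x * t0 y) (t0 x * t2 y + t1 x * t1 y + t2 x * t0 y)"
instance by standard (auto simp: zero_tr_def one_tr_def plus_tr_def uminus_tr_def minus_tr_def times_tr_def algebra_simps intro: tr.expand)
end

lemma tr_simps[simp]:
  "t0 0 = 0" "t1 0 = 0" "t2 0 = 0" "t0 1 = 1" "t1 1 = 0" "t2 1 = 0"
  "t0 (x+y) = t0 x + t0 y" "t1 (x+y) = t1 x + t1 y" "t2 (x+y) = t2 x + t2 y"
  "t0 (x-y) = t0 x - t0 y" "t1 (x-y) = t1 x - t1 y" "t2 (x-y) = t2 x - t2 y"
  "t0 (x*y) = t0 x * t0 y" "t1 (x*y) = t0 x * t1 y + t1 x * t0 y"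
  "t2 (x*y) = t0 x * t2 y + t1 x * t1 y + t2 x * t0 y"
  by (simp_all add: zero_tr_def one_tr_def plus_tr_def minus_tr_def times_tr_def)

lemma tr_eqI: "t0 x = t0 y \<Longrightarrow> t1 x = t1 y \<Longrightarrow> t2 x = t2 y \<Longrightarrow> x = y"
  by (rule tr.expand) simp

definition tc :: "tr \<Rightarrow> nat \<Rightarrow> real" where
  "tc x i = (if i = 0 then t0 x else if i = 1 then t1 x else t2 x)"

lemma tc_add[simp]: "tc (x+y) i = tc x i + tc y i" and tc_diff[simp]: "tc (x-y) i = tc x i - tc y i"
  by (simp_all add: tc_def)

lemma t0_prod: "t0 (prod f A) = prod (\<lambda>a. t0 (f a)) A"
  by (induction A rule: infinite_finite_induct) auto

lemma tc_sum: "tc (sum f A) i = sum (\<lambda>a. tc (f a) i) A"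
  by (induction A rule: infinite_finite_induct) (auto simp: tc_def)

definition sc :: "real \<Rightarrow> tr" where "sc r = T r 0 0"
lemma sc_simps[simp]: "t0 (sc r) = r" "t1 (sc r) = 0" "t2 (sc r) = 0"
  by (simp_all add: sc_def)
lemma sc_mult_tc[simp]: "tc (sc r * x) i = r * tc x i" by (simp add: tc_def)
lemma sc_one: "sc 1 = 1" by (rule tr_eqI) simp_all
lemma sc_mult: "sc a * sc b = sc (a*b)" by (rule tr_eqI) simp_all

definition Yv :: tr where "Yv = T 0 1 0"
definition e :: "nat \<Rightarrow> tr" where "e j = T (1/real j^2) (1/real j^4) (1/real j^6)"
definition D :: "nat \<Rightarrow> nat \<Rightarrow> tr" where "D n k = (\<Prod>m\<le>n. e (k+m))"
definition fm :: "nat \<Rightarrow> tr" where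
  "fm m = T (real m^3/(2*(2*real m-1))) (-(2*real m/(2*real m-1))) 0"
definition cc :: "nat \<Rightarrow> tr" where "cc n = (\<Prod>m<n. fm (m+1))"
definition gA :: "nat \<Rightarrow> nat \<Rightarrow> real" where
  "gA n k = real k/(2*real n+1) + (3*real n+1)/(2*(2*real n+1))"
definition r :: "nat \<Rightarrow> nat \<Rightarrow> tr" where "r n k = cc n * D n k"
definition G :: "nat \<Rightarrow> nat \<Rightarrow> tr" where "G n k = sc (gA n k) * (cc n * D n k)"

lemma e_inv: "j > 0 \<Longrightarrow> e j * (sc (real j^2) - Yv) = 1"
  by (rule tr_eqI) (simp_all add: e_def Yv_def field_simps)

lemma D_Suc1: "D (Suc n) k = D n k * e (k + Suc n)"
  by (simp add: D_def)
lemma D_Suc2: "D (Suc n) k = e k * D n (Suc k)"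
  unfolding D_def by (subst prod.atMost_Suc_shift) simp

lemma D_back1: "k > 0 \<Longrightarrow> D n k = D (Suc n) k * (sc (real (k+Suc n)^2) - Yv)"
proof -
  assume "k > 0"
  hence 1: "e (k + Suc n) * (sc (real (k+Suc n)^2) - Yv) = 1" by (intro e_inv) simp
  have "D (Suc n) k * (sc (real (k+Suc n)^2) - Yv) = D n k * (e (k + Suc n) * (sc (real (k+Suc n)^2) - Yv))"
    unfolding D_Suc1 by (rule mult.assoc)
  thus ?thesis unfolding 1 by simp
qed

lemma D_back2: "k > 0 \<Longrightarrow> D n (Suc k) = D (Suc n) k * (sc (real k^2) - Yv)"
proof -
  assume "k > 0"
  hence 1: "e k * (sc (real k^2) - Yv) = 1" by (intro e_inv)
  have "D (Suc n) k * (sc (real k^2) - Yv) = D n (Suc k) * (e k * (sc (real k^2) - Yv))"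
    unfolding D_Suc2 by (simp only: ac_simps)
  thus ?thesis unfolding 1 by simp
qed

lemma c0: fixes k n :: real assumes "n \<ge> 0"
  shows "(k+n+1)^2 - (n+1)^3/(2*(2*(n+1)-1)) = (k/(2*n+1) + (3*n+1)/(2*(2*n+1))) * (k+n+1)^2 - ((k+1)/(2*n+1) + (3*n+1)/(2*(2*n+1))) * k^2"
proof -
  have h: "2*n+1 > 0" "2*(n+1)-1 = 2*n+1" using assms by auto
  show ?thesis unfolding h(2) using h(1) by (simp add: divide_simps) (simp add: algebra_simps power2_eq_square power3_eq_cube)
qed

lemma c1: fixes k n :: real assumes "n \<ge> 0"
  shows "-1 + 2*(n+1)/(2*(n+1)-1) = - (k/(2*n+1) + (3*n+1)/(2*(2*n+1))) + ((k+1)/(2*n+1) + (3*n+1)/(2*(2*n+1)))"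
proof -
  have h: "2*n+1 > 0" "2*(n+1)-1 = 2*n+1" using assms by auto
  show ?thesis unfolding h(2) using h(1) by (simp add: divide_simps) (simp add: algebra_simps)
qed

lemma c0nat: "real (k+Suc n)^2 - real (Suc n)^3/(2*(2*real (Suc n)-1)) = gA n k * real (k+Suc n)^2 - gA n (Suc k) * real k^2"
proof -
  have e: "real (k+Suc n) = real k + real n + 1" "real (Suc n) = real n + 1" "real (Suc k) = real k + 1" by simp_all
  show ?thesis unfolding gA_def e by (rule c0) simp
qed

lemma c1nat: "-1 + 2*real (Suc n)/(2*real (Suc n)-1) = - gA n k + gA n (Suc k)"
proof -
  have e: "real (Suc n) = real n + 1" "real (Suc k) = real k + 1" by simp_all
  show ?thesis unfolding gA_def e by (rule c1) simp
qed

lemma key_concrete: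
  "(sc (real (k+Suc n)^2) - Yv) - fm (Suc n) =
    sc (gA n k) * (sc (real (k+Suc n)^2) - Yv) - sc (gA n (Suc k)) * (sc (real k^2) - Yv)"
proof (rule tr_eqI)
  show "t0 (sc (real (k+Suc n)^2) - Yv - fm (Suc n)) = t0 (sc (gA n k) * (sc (real (k+Suc n)^2) - Yv) - sc (gA n (Suc k)) * (sc (real k^2) - Yv))"
    apply (simp only: tr_simps sc_simps tr.sel fm_def Yv_def diff_zero mult_zero_left mult_zero_right add_0_right add_0_left)
    by (rule c0nat)
  show "t1 (sc (real (k+Suc n)^2) - Yv - fm (Suc n)) = t1 (sc (gA n k) * (sc (real (k+Suc n)^2) - Yv) - sc (gA n (Suc k)) * (sc (real k^2) - Yv))"
    apply (simp only: tr_simps sc_simps tr.sel fm_def Yv_def diff_zero mult_zero_left mult_zero_right add_0_right add_0_left zero_diff mult_1_right)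
    using c1nat[of n k] by simp
qed (simp add: fm_def Yv_def)

lemma ring_aux1: "(C::'a::comm_ring_1) * (P*A) - (C*F)*P = C*P*(A - F)"
  by (simp add: algebra_simps)
lemma ring_aux2: "(a::'a::comm_ring_1) * (C * (P*A)) - b * (C * (P*B)) = C*P*(a * A - b * B)"
  by (simp add: algebra_simps)

lemma cc_Suc: "cc (Suc n) = cc n * fm (Suc n)"
  by (simp add: cc_def)

lemma key: "k > 0 \<Longrightarrow> r n k - r (Suc n) k = G n k - G n (Suc k)"
proof -
  assume k: "k > 0"
  let ?P = "D (Suc n) k" and ?C = "cc n"
  let ?A = "sc (real (k+Suc n)^2) - Yv" and ?B = "sc (real k^2) - Yv"
  have "r n k - r (Suc n) k = ?C * (?P * ?A) - (?C * fm (Suc n)) * ?P"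
    unfolding r_def cc_Suc D_back1[OF k, of n] ..
  also have "\<dots> = ?C * ?P * (?A - fm (Suc n))" by (rule ring_aux1)
  also have "\<dots> = ?C * ?P * (sc (gA n k) * ?A - sc (gA n (Suc k)) * ?B)"
    by (simp only: key_concrete)
  also have "\<dots> = sc (gA n k) * (?C * (?P * ?A)) - sc (gA n (Suc k)) * (?C * (?P * ?B))"
    by (rule ring_aux2[symmetric])
  also have "\<dots> = G n k - G n (Suc k)"
    unfolding G_def D_back1[OF k, of n, symmetric] D_back2[OF k, of n, symmetric] ..
  finally show ?thesis .
qed

definition dm :: "real \<Rightarrow> tr \<Rightarrow> bool" where
  "dm s x \<longleftrightarrow> 0 \<le> t0 x \<and> \<bar>t1 x\<bar> \<le> s * t0 x \<and> \<bar>t2 x\<bar> \<le> s^2 * t0 x"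

lemma dm_mult:
  assumes s: "0 \<le> s" "0 \<le> t" and x: "dm s x" and y: "dm t y"
  shows "dm (s+t) (x*y)"
proof -
  define a b c d f g where "a = t0 x" "b = t1 x" "c = t2 x" "d = t0 y" "f = t1 y" "g = t2 y"
  have a: "0 \<le> a" and b: "\<bar>b\<bar> \<le> s*a" and c: "\<bar>c\<bar> \<le> s^2*a"
    using x unfolding dm_def a_b_c_d_f_g_def by auto
  have d: "0 \<le> d" and f: "\<bar>f\<bar> \<le> t*d" and g: "\<bar>g\<bar> \<le> t^2*d"
    using y unfolding dm_def a_b_c_d_f_g_def by auto
  have 1: "\<bar>a*f\<bar> \<le> a*(t*d)" using a f by (simp add: abs_mult mult_left_mono)
  have 2: "\<bar>b*d\<bar> \<le> (s*a)*d" using d b by (simp add: abs_mult mult_right_mono)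
  have 3: "\<bar>b*f\<bar> \<le> (s*a)*(t*d)" unfolding abs_mult by (rule mult_mono[OF b f]) (use s a in auto)
  have 4: "\<bar>a*g\<bar> \<le> a*(t^2*d)" using a g by (simp add: abs_mult mult_left_mono)
  have 5: "\<bar>c*d\<bar> \<le> (s^2*a)*d" using d c by (simp add: abs_mult mult_right_mono)
  have 6: "0 \<le> s*t*a*d" using s a d by simp
  have "\<bar>a*f + b*d\<bar> \<le> (s+t)*(a*d)"
    using abs_triangle_ineq[of "a*f" "b*d"] 1 2 by (simp add: algebra_simps)
  moreover have "\<bar>a*g + b*f + c*d\<bar> \<le> (s+t)^2*(a*d)"
  proof -
    have "\<bar>a*g + b*f + c*d\<bar> \<le> \<bar>a*g\<bar> + \<bar>b*f\<bar> + \<bar>c*d\<bar>"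
      by (meson abs_triangle_ineq add_mono order_trans order_refl)
    also have "\<dots> \<le> a*(t^2*d) + (s*a)*(t*d) + (s^2*a)*d" using 3 4 5 by linarith
    also have "\<dots> \<le> (s+t)^2*(a*d)" using 6 by (simp add: power2_eq_square algebra_simps)
    finally show ?thesis .
  qed
  ultimately show ?thesis using a d unfolding dm_def a_b_c_d_f_g_def by simp
qed

lemma dm_one: "0 \<le> s \<Longrightarrow> dm s 1" by (simp add: dm_def)

lemma dm_prod:
  assumes "finite A" "\<And>i. i \<in> A \<Longrightarrow> 0 \<le> s i \<and> dm (s i) (f i)"
  shows "dm (sum s A) (prod f A)"
  using assms
proof (induction A rule: finite_induct)
  case empty thus ?case by (simp add: dm_one)
next
  case (insert a A)
  have "dm (s a + sum s A) (f a * prod f A)"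
    by (rule dm_mult) (use insert in \<open>auto intro: sum_nonneg\<close>)
  thus ?case using insert by simp
qed

lemma dm_mono: assumes "dm s x" "0 \<le> s" "s \<le> t" shows "dm t x"
proof -
  have "s * t0 x \<le> t * t0 x" "s^2 * t0 x \<le> t^2 * t0 x"
    using assms by (auto simp: dm_def intro!: mult_right_mono power_mono)
  thus ?thesis using assms unfolding dm_def by auto
qed

lemma dm_tc: assumes "dm s x" "0 \<le> s" "s \<le> S" "1 \<le> S" shows "\<bar>tc x i\<bar> \<le> S^2 * t0 x"
proof -
  have x: "0 \<le> t0 x" "\<bar>t1 x\<bar> \<le> s * t0 x" "\<bar>t2 x\<bar> \<le> s^2 * t0 x" using assms(1) by (auto simp: dm_def)
  have "s * t0 x \<le> S^2 * t0 x"
  proof -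
    have "S * 1 \<le> S * S" using assms(4) by (intro mult_left_mono) auto
    hence "s \<le> S^2" using assms(3) by (simp add: power2_eq_square)
    thus ?thesis using x(1) by (rule mult_right_mono)
  qed
  moreover have "s^2 * t0 x \<le> S^2 * t0 x" using assms x(1) by (intro mult_right_mono power_mono) auto
  moreover have "t0 x \<le> S^2 * t0 x" using x(1) assms(4)
    by (metis mult_le_cancel_right1 one_le_power order_le_less not_le)
  ultimately show ?thesis using x by (auto simp: tc_def)
qed

lemma dm_e: "j > 0 \<Longrightarrow> dm (1/real j^2) (e j)"
  by (simp add: dm_def e_def power_add[symmetric] power2_eq_square field_simps eval_nat_numeral)

lemma inv_sq_mono: fixes a b :: real shows "0 < a \<Longrightarrow> a \<le> b \<Longrightarrow> 1/b^2 \<le> 1/a^2"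
  by (intro divide_left_mono power_mono mult_pos_pos zero_less_power) auto

lemma dm_fm: "m > 0 \<Longrightarrow> dm (4/real m^2) (fm m)"
proof -
  assume m: "m > 0"
  hence p: "2*real m - 1 > 0" by simp
  have "\<bar>-(2*real m/(2*real m-1))\<bar> = 4/real m^2 * (real m^3/(2*(2*real m-1)))"
    using m p by (simp add: field_simps power2_eq_square power3_eq_cube)
  thus ?thesis using p by (simp add: dm_def fm_def)
qed

lemma sum_sq_bound_aux: "(\<Sum>m<Suc n. 1/(real m+1)^2) \<le> 2 - 1/(real n+1)"
proof (induction n)
  case 0 thus ?case by simp
next
  case (Suc n)
  have "1/(real n + 2)^2 \<le> 1/((real n+1)*(real n+2))"
    unfolding power2_eq_square by (intro divide_left_mono mult_right_mono mult_pos_pos) auto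
  also have "\<dots> = 1/(real n+1) - 1/(real n+2)" by (simp add: field_simps)
  finally have "1/(real n + 2)^2 \<le> 1/(real n+1) - 1/(real n+2)" .
  moreover have s: "(\<Sum>m<Suc (Suc n). 1/(real m+1)^2) = (\<Sum>m<Suc n. 1/(real m+1)^2) + 1/(real (Suc n)+1)^2"
    by (rule sum.lessThan_Suc)
  moreover have e: "real (Suc n) + 1 = real n + 2" by simp
  ultimately show ?case using Suc.IH unfolding s e by linarith
qed

lemma sum_sq_bound: "(\<Sum>m<n. 1/(real m+1)^2) \<le> 2"
proof (cases n)
  case 0 thus ?thesis by simp
next
  case (Suc n')
  have "0 \<le> 1/(real n'+1)" by simp
  thus ?thesis using sum_sq_bound_aux[of n'] unfolding Suc by linarith
qed

lemma D_dom: assumes "k > 0" shows "dm 2 (D n k)"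
proof -
  have h: "\<And>m. dm (1/real (k+m)^2) (e (k+m))" using assms by (intro dm_e) simp
  have a: "dm (\<Sum>m\<le>n. 1/real (k+m)^2) (D n k)"
    unfolding D_def by (intro dm_prod) (use h in auto)
  have b: "(\<Sum>m\<le>n. 1/real (k+m)^2) \<le> (\<Sum>m<Suc n. 1/(real m+1)^2)"
    unfolding lessThan_Suc_atMost using assms
    by (intro sum_mono inv_sq_mono) auto
  have c: "0 \<le> (\<Sum>m\<le>n. 1/real (k+m)^2)" by (intro sum_nonneg) simp
  show ?thesis by (rule dm_mono[OF a c]) (use b sum_sq_bound[of "Suc n"] in linarith)
qed

lemma cc_dom: "dm 8 (cc n)"
proof -
  have h: "\<And>m. dm (4/real (m+1)^2) (fm (m+1))" by (intro dm_fm) simp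
  have a: "dm (\<Sum>m<n. 4/real (m+1)^2) (cc n)"
    unfolding cc_def by (intro dm_prod) (use h in auto)
  have b: "(\<Sum>m<n. 4/real (m+1)^2) = 4 * (\<Sum>m<n. 1/(real m+1)^2)"
    by (simp add: sum_distrib_left add.commute)
  have c: "0 \<le> (\<Sum>m<n. 4/real (m+1)^2)" by (intro sum_nonneg) simp
  show ?thesis by (rule dm_mono[OF a c]) (use b sum_sq_bound[of n] in linarith)
qed

lemma r_dom: "k > 0 \<Longrightarrow> dm 10 (r n k)"
  unfolding r_def using dm_mult[OF _ _ cc_dom D_dom] by simp

lemma t0_D: "t0 (D n k) = (\<Prod>m\<le>n. 1/real (k+m)^2)"
  by (simp add: D_def t0_prod e_def)

definition pb :: "nat \<Rightarrow> real" where "pb n = (\<Prod>m<n. 1/real (m+2)^2)"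

lemma t0_D_bound: assumes "k > 0" shows "t0 (D n k) \<le> 1/real k^2 * pb n"
proof -
  have "t0 (D n k) = 1/real k^2 * (\<Prod>m<n. 1/real (k + Suc m)^2)"
    unfolding t0_D by (subst prod.atMost_shift) simp
  also have "\<dots> \<le> 1/real k^2 * pb n"
    unfolding pb_def using assms
    by (intro mult_left_mono prod_mono conjI inv_sq_mono) auto
  finally show ?thesis .
qed

lemma pb_le1: "pb n \<le> 1"
  unfolding pb_def by (rule prod_le_1) (auto simp: field_simps)

lemma t0_cc: "t0 (cc n) = (\<Prod>m<n. real (m+1)^3/(2*(2*real (m+1)-1)))"
  by (simp add: cc_def t0_prod fm_def)

lemma t0_cc_nonneg: "0 \<le> t0 (cc n)" using cc_dom by (simp add: dm_def)

lemma u_bound: "t0 (cc n) * pb n \<le> (1/2)^n"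
proof -
  have "t0 (cc n) * pb n = (\<Prod>m<n. real (m+1)^3/(2*(2*real (m+1)-1)) * (1/real (m+2)^2))"
    unfolding t0_cc pb_def prod.distrib ..
  also have "\<dots> \<le> (\<Prod>m<n. 1/2)"
  proof (rule prod_mono)
    fix m assume "m \<in> {..<n}"
    have le: "real (m+1)^3 \<le> (2*real m + 1) * real (m+2)^2"
    proof -
      have "real (m+1)^3 = real (m+1) * real (m+1)^2" by (simp add: power3_eq_cube power2_eq_square)
      also have "\<dots> \<le> (2*real m + 1) * real (m+2)^2"
        by (intro mult_mono power_mono) auto
      finally show ?thesis .
    qed
    have p: "0 < 2*real m + 1" by simp
    have "real (m+1)^3/(2*(2*real (m+1)-1)) * (1/real (m+2)^2) = real (m+1)^3 / (2 * ((2*real m+1) * real (m+2)^2))"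
      by (simp add: field_simps)
    also have "\<dots> \<le> ((2*real m + 1) * real (m+2)^2) / (2 * ((2*real m+1) * real (m+2)^2))"
      using le p by (intro divide_right_mono) auto
    also have "\<dots> = 1/2" using p by simp
    finally have 1: "real (m+1)^3/(2*(2*real (m+1)-1)) * (1/real (m+2)^2) \<le> 1/2" .
    have "2*real (m+1)-1 > 0" by simp
    hence 2: "0 \<le> real (m+1)^3/(2*(2*real (m+1)-1)) * (1/real (m+2)^2)"
      by (intro mult_nonneg_nonneg divide_nonneg_nonneg) auto
    show "0 \<le> real (m+1)^3/(2*(2*real (m+1)-1)) * (1/real (m+2)^2) \<and>
       real (m+1)^3/(2*(2*real (m+1)-1)) * (1/real (m+2)^2) \<le> 1/2"
      using 1 2 by (rule conjI[rotated])
  qed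
  also have "(\<Prod>m<n. (1::real)/2) = (1/2)^n" by (rule prod_constant[THEN trans]) simp
  finally show ?thesis .
qed

lemma summable_inv_sq: "summable (\<lambda>k. 1/(real k+1)^2)"
proof -
  have "summable (\<lambda>k. inverse (real k ^ 2))" by (rule inverse_power_summable) simp
  hence "summable (\<lambda>k. inverse (real (Suc k) ^ 2))" by (subst summable_Suc_iff)
  thus ?thesis by (simp add: field_simps add.commute)
qed

lemma suminf_inv_sq_le: "(\<Sum>k. 1/(real k+1)^2) \<le> 2"
  by (rule suminf_le_const[OF summable_inv_sq sum_sq_bound])

lemma r_bound: "\<bar>tc (r n (Suc k)) i\<bar> \<le> 100 * (1/2)^n * (1/(real k+1)^2)"
proof -
  have "\<bar>tc (r n (Suc k)) i\<bar> \<le> 10^2 * t0 (r n (Suc k))"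
    by (rule dm_tc[OF r_dom]) auto
  also have "t0 (r n (Suc k)) = t0 (cc n) * t0 (D n (Suc k))" by (simp add: r_def)
  also have "\<dots> \<le> t0 (cc n) * (1/real (Suc k)^2 * pb n)"
    by (intro mult_left_mono t0_D_bound t0_cc_nonneg) simp
  also have "\<dots> = (t0 (cc n) * pb n) * (1/(real k+1)^2)" by (simp add: add.commute)
  also have "\<dots> \<le> (1/2)^n * (1/(real k+1)^2)"
    by (intro mult_right_mono u_bound) simp
  finally show ?thesis by simp
qed

lemma r_summable: "summable (\<lambda>k. tc (r n (Suc k)) i)"
proof (rule summable_comparison_test)
  show "\<exists>N. \<forall>k\<ge>N. norm (tc (r n (Suc k)) i) \<le> 100 * (1/2)^n * (1/(real k+1)^2)"
    using r_bound by auto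
  show "summable (\<lambda>k. 100 * (1/2)^n * (1/(real k+1)^2))"
    by (intro summable_mult summable_inv_sq)
qed

definition Rs :: "nat \<Rightarrow> nat \<Rightarrow> real" where "Rs i n = (\<Sum>k. tc (r n (Suc k)) i)"

lemma Rs_bound: "\<bar>Rs i n\<bar> \<le> 200 * (1/2)^n"
proof -
  let ?g = "\<lambda>k. 100 * (1/2)^n * (1/(real k+1)^2)"
  have sg: "summable ?g" by (intro summable_mult summable_inv_sq)
  have "Rs i n \<le> suminf ?g" unfolding Rs_def
    by (rule suminf_le[OF _ r_summable sg]) (rule abs_le_D1[OF r_bound])
  moreover have "- suminf ?g \<le> Rs i n" unfolding Rs_def suminf_minus[OF sg, symmetric]
  proof (rule suminf_le[OF _ summable_minus[OF sg] r_summable])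
    fix k show "- ?g k \<le> tc (r n (Suc k)) i" using abs_le_D2[OF r_bound[of n k i]] by linarith
  qed
  moreover have "suminf ?g = 100 * (1/2)^n * (\<Sum>k. 1/(real k+1)^2)"
    by (rule suminf_mult[OF summable_inv_sq])
  moreover have "100 * (1/2)^n * (\<Sum>k. 1/(real k+1)^2) \<le> 100 * (1/2)^n * 2"
    by (intro mult_left_mono suminf_inv_sq_le) simp
  ultimately show ?thesis unfolding abs_le_iff by linarith
qed

lemma Rs_lim: "(\<lambda>n. Rs i n) \<longlonglongrightarrow> 0"
proof (rule Lim_null_comparison)
  show "\<forall>\<^sub>F n in sequentially. norm (Rs i n) \<le> 200 * (1/2)^n" using Rs_bound by simp
  show "(\<lambda>n. 200 * (1/2::real)^n) \<longlonglongrightarrow> 0"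
    by (intro tendsto_mult_right_zero LIMSEQ_power_zero) simp
qed

lemma gA_bound: "0 \<le> gA n k \<and> gA n k \<le> real k + 1"
proof -
  have "real k/(2*real n+1) \<le> real k" by (simp add: field_simps)
  moreover have "(3*real n+1)/(2*(2*real n+1)) \<le> 1" by (simp add: field_simps)
  moreover have "0 \<le> real k/(2*real n+1)" "0 \<le> (3*real n+1)/(2*(2*real n+1))" by simp_all
  ultimately show ?thesis unfolding gA_def by linarith
qed

lemma G_bound: "\<bar>tc (G n (Suc k)) i\<bar> \<le> 100 * t0 (cc n) * ((real k + 2) / (real k + 1)^2)"
proof -
  have "\<bar>tc (G n (Suc k)) i\<bar> = gA n (Suc k) * \<bar>tc (r n (Suc k)) i\<bar>"
    using gA_bound[of n "Suc k"] by (simp add: G_def r_def abs_mult)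
  also have "\<bar>tc (r n (Suc k)) i\<bar> \<le> 10^2 * t0 (r n (Suc k))"
    by (rule dm_tc[OF r_dom]) auto
  also have "t0 (r n (Suc k)) = t0 (cc n) * t0 (D n (Suc k))" by (simp add: r_def)
  also have "\<dots> \<le> t0 (cc n) * (1/real (Suc k)^2 * pb n)"
    by (intro mult_left_mono t0_D_bound t0_cc_nonneg) simp
  also have "\<dots> \<le> t0 (cc n) * (1/real (Suc k)^2)"
    using pb_le1[of n] t0_cc_nonneg[of n] by (intro mult_left_mono mult_left_le) auto
  finally have "\<bar>tc (G n (Suc k)) i\<bar> \<le> gA n (Suc k) * (10^2 * (t0 (cc n) * (1/real (Suc k)^2)))"
    using gA_bound[of n "Suc k"] by (simp add: mult_left_mono)
  also have "\<dots> \<le> (real k + 2) * (10^2 * (t0 (cc n) * (1/real (Suc k)^2)))"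
    using gA_bound[of n "Suc k"] t0_cc_nonneg[of n] by (intro mult_right_mono) auto
  also have "\<dots> = 100 * t0 (cc n) * ((real k + 2) / (real k + 1)^2)"
    by (simp add: field_simps add.commute)
  finally show ?thesis .
qed

lemma G_lim: "(\<lambda>k. tc (G n (Suc k)) i) \<longlonglongrightarrow> 0"
proof (rule Lim_null_comparison)
  show "\<forall>\<^sub>F k in sequentially. norm (tc (G n (Suc k)) i) \<le> 100 * t0 (cc n) * ((real k + 2) / (real k + 1)^2)"
    using G_bound by simp
  have "(\<lambda>k. (real k + 2) / (real k + 1)^2) \<longlonglongrightarrow> 0" by real_asymp
  thus "(\<lambda>k. 100 * t0 (cc n) * ((real k + 2) / (real k + 1)^2)) \<longlonglongrightarrow> 0"
    by (rule tendsto_mult_right_zero)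
qed

lemma Rs_step: "Rs i n - Rs i (Suc n) = tc (G n 1) i"
proof -
  have "(\<lambda>k. tc (G n (Suc k)) i - tc (G n (Suc (Suc k))) i) sums (tc (G n (Suc 0)) i - 0)"
    by (rule telescope_sums'[OF G_lim])
  moreover have "(\<lambda>k. tc (G n (Suc k)) i - tc (G n (Suc (Suc k))) i) = (\<lambda>k. tc (r n (Suc k)) i - tc (r (Suc n) (Suc k)) i)"
    using key[of "Suc _" n] by (simp flip: tc_diff)
  moreover have "(\<lambda>k. tc (r n (Suc k)) i - tc (r (Suc n) (Suc k)) i) sums (Rs i n - Rs i (Suc n))"
    unfolding Rs_def by (intro sums_diff summable_sums r_summable)
  ultimately show ?thesis by (simp add: sums_iff)
qed

lemma Rs_tel: "(\<Sum>n<N. tc (G n 1) i) = Rs i 0 - Rs i N"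
  unfolding Rs_step[symmetric] by (rule sum_lessThan_telescope')

lemma r0: "r 0 k = e k" by (simp add: r_def cc_def D_def)

lemma Rs0: "Rs 0 0 = zeta_nat 2" "Rs 1 0 = zeta_nat 4" "Rs 2 0 = zeta_nat 6"
  by (simp_all add: Rs_def r0 tc_def e_def zeta_nat_def)

definition aq :: "nat \<Rightarrow> real" where "aq m = real m/(2*(2*real m+1))"
definition qf :: "nat \<Rightarrow> tr" where "qf m = T (aq m) (-3*aq m/real m^2) 0"
definition wfm :: "nat \<Rightarrow> tr" where "wfm m = T (aq m) (-3*aq m/real m^2) (-3*aq m/real m^4)"
definition Qp :: "nat \<Rightarrow> tr" where "Qp n = (\<Prod>m<n. qf (m+1))"
definition Wp :: "nat \<Rightarrow> tr" where "Wp n = (\<Prod>m<n. wfm (m+1))"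
definition Vv :: "nat \<Rightarrow> tr" where "Vv m = T (3/(2*real m)) (3/(2*real m^3)) (3/(2*real m^5))"

lemma fmw_real0: fixes m :: real assumes "m \<ge> 1"
  shows "(2*m-1) * (1/m^2) * (m^3/(2*(2*m-1))) = (2*m+1) * (m/(2*(2*m+1)))"
proof -
  have "2*m-1 > 0" "2*m+1 > 0" using assms by auto
  thus ?thesis using assms by (simp add: divide_simps) (simp add: algebra_simps power2_eq_square power3_eq_cube)
qed
lemma fmw_real1: fixes m :: real assumes "m \<ge> 1"
  shows "(2*m-1) * ((1/m^2) * (-(2*m/(2*m-1))) + (1/m^4) * (m^3/(2*(2*m-1)))) = (2*m+1) * (-3*(m/(2*(2*m+1)))/m^2)"
proof -
  have "2*m-1 > 0" "2*m+1 > 0" using assms by auto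
  thus ?thesis using assms by (simp add: divide_simps) (simp add: algebra_simps power2_eq_square power3_eq_cube eval_nat_numeral)
qed
lemma fmw_real2: fixes m :: real assumes "m \<ge> 1"
  shows "(2*m-1) * ((1/m^4) * (-(2*m/(2*m-1))) + (1/m^6) * (m^3/(2*(2*m-1)))) = (2*m+1) * (-3*(m/(2*(2*m+1)))/m^4)"
proof -
  have "2*m-1 > 0" "2*m+1 > 0" using assms by auto
  thus ?thesis using assms by (simp add: divide_simps) (simp add: algebra_simps power2_eq_square power3_eq_cube eval_nat_numeral)
qed

lemma fm_wf: assumes "m > 0" shows "sc (2*real m-1) * e m * fm m = sc (2*real m+1) * wfm m"
proof (rule tr_eqI)
  have m: "real m \<ge> 1" using assms by simp
  show "t0 (sc (2*real m-1) * e m * fm m) = t0 (sc (2*real m+1) * wfm m)"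
    using fmw_real0[OF m] by (simp add: e_def fm_def wfm_def aq_def)
  show "t1 (sc (2*real m-1) * e m * fm m) = t1 (sc (2*real m+1) * wfm m)"
    using fmw_real1[OF m] by (simp add: e_def fm_def wfm_def aq_def algebra_simps)
  show "t2 (sc (2*real m-1) * e m * fm m) = t2 (sc (2*real m+1) * wfm m)"
    using fmw_real2[OF m] by (simp add: e_def fm_def wfm_def aq_def algebra_simps)
qed

lemma ring_aux3: "(a::'a::comm_ring_1) * W * E * (F * E2) = (a * E * F) * W * E2"
  by (simp add: ac_simps)

lemma ccD1: "cc n * D n 1 = sc (2*real n+1) * Wp n * e (Suc n)"
proof (induction n)
  case 0 thus ?case by (simp add: cc_def D_def Wp_def sc_one)
next
  case (Suc n)
  have s1: "cc (Suc n) * D (Suc n) 1 = (cc n * D n 1) * (fm (Suc n) * e (Suc (Suc n)))"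
    by (simp add: cc_Suc D_Suc1 ac_simps)
  have s2: "(cc n * D n 1) * (fm (Suc n) * e (Suc (Suc n))) = (sc (2*real n+1) * e (Suc n) * fm (Suc n)) * Wp n * e (Suc (Suc n))"
    unfolding Suc.IH ring_aux3 ..
  have fw: "sc (2*real n+1) * e (Suc n) * fm (Suc n) = sc (2*real (Suc n)+1) * wfm (Suc n)"
    using fm_wf[of "Suc n"] by (simp add: add.commute)
  have s3: "sc (2*real (Suc n)+1) * wfm (Suc n) * Wp n * e (Suc (Suc n)) = sc (2*real (Suc n)+1) * Wp (Suc n) * e (Suc (Suc n))"
    by (simp add: Wp_def ac_simps)
  show ?case unfolding s1 s2 fw s3 ..
qed

lemma scV: fixes y :: real assumes "y > 0"
  shows "sc (3*y/2) * T (1/y^2) (1/y^4) (1/y^6) = T (3/(2*y)) (3/(2*y^3)) (3/(2*y^5))"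
  by (rule tr_eqI) (use assms in \<open>simp_all add: field_simps eval_nat_numeral\<close>)

lemma gV: "sc (gA n 1) * sc (2*real n+1) * e (Suc n) = Vv (Suc n)"
proof -
  have p: "2*real n+1 > 0" by simp
  have g1: "gA n 1 = 3*(real n+1)/(2*(2*real n+1))"
    unfolding gA_def using p by (simp add: divide_simps) (simp add: algebra_simps)
  have g: "gA n 1 * (2*real n+1) = 3*real (Suc n)/2"
    unfolding g1 using p by (simp add: divide_simps) (simp add: algebra_simps)
  have "sc (gA n 1) * sc (2*real n+1) = sc (3*real (Suc n)/2)" unfolding sc_mult g ..
  moreover have "sc (3*real (Suc n)/2) * e (Suc n) = Vv (Suc n)"
    unfolding e_def Vv_def by (rule scV) simp
  ultimately show ?thesis by simp
qed

lemma G1: "G n 1 = Wp n * Vv (Suc n)"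
proof -
  have "G n 1 = sc (gA n 1) * (sc (2*real n+1) * Wp n * e (Suc n))"
    unfolding G_def ccD1 ..
  also have "\<dots> = Wp n * (sc (gA n 1) * sc (2*real n+1) * e (Suc n))" by (simp add: ac_simps)
  finally show ?thesis unfolding gV .
qed

lemma wf_qf: "wfm m = qf m * T 1 0 (-3/real m^4)"
  by (rule tr_eqI) (simp_all add: wfm_def qf_def)

lemma T10_mult: "T 1 0 x * T 1 0 y = T 1 0 (x+y)"
  by (rule tr_eqI) simp_all

lemma Hp_Suc: "Hp p (Suc n) = Hp p n + 1/real (Suc n)^p"
  by (simp add: Hp_def)

lemma ring_aux4: "((a::'a::comm_ring_1)*b)*(c*d) = (a*c)*(b*d)" by (simp add: ac_simps)

lemma Wp_Qp: "Wp n = Qp n * T 1 0 (-3*Hp 4 n)"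
proof (induction n)
  case 0 thus ?case by (simp add: Wp_def Qp_def Hp_def one_tr_def[symmetric])
next
  case (Suc n)
  have "Wp (Suc n) = Wp n * wfm (Suc n)" unfolding Wp_def by simp
  also have "\<dots> = (Qp n * T 1 0 (-3*Hp 4 n)) * (qf (Suc n) * T 1 0 (-3/real (Suc n)^4))"
    unfolding Suc.IH wf_qf ..
  also have "\<dots> = (Qp n * qf (Suc n)) * (T 1 0 (-3*Hp 4 n) * T 1 0 (-3/real (Suc n)^4))"
    by (rule ring_aux4)
  also have "Qp n * qf (Suc n) = Qp (Suc n)" by (simp add: Qp_def)
  also have "T 1 0 (-3*Hp 4 n) * T 1 0 (-3/real (Suc n)^4) = T 1 0 (-3*Hp 4 (Suc n))"
    unfolding T10_mult Hp_Suc by (simp add: algebra_simps)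
  finally show ?case .
qed

lemma tc_G1: "tc (G n 1) i = tc (Qp n * Vv (Suc n)) i - (if i < 2 then 0 else 3 * Hp 4 n * t0 (Qp n) * t0 (Vv (Suc n)))"
  unfolding G1 Wp_Qp by (simp add: tc_def algebra_simps)

lemma cb_aux: fixes y z F G :: real assumes "y > 0" "F > 0"
  shows "(2*y)*z*G/((y*F)*(y*F)) * y = 2*z*(G/(F*F))"
  using assms by (simp add: field_simps)

lemma cb: "real ((2*n+2) choose (n+1)) * real (n+1) = 2*(2*real n+1) * real ((2*n) choose n)"
proof -
  have a: "real ((2*n+2) choose (n+1)) = fact (2*n+2) / (fact (n+1) * fact (2*n+2-(n+1)))"
    by (rule binomial_fact) simp
  have b: "real ((2*n) choose n) = fact (2*n) / (fact n * fact (2*n-n))"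
    by (rule binomial_fact) simp
  have e: "2*n+2-(n+1) = n+1" "2*n-n = n" by simp_all
  have c: "(fact (2*n+2) :: real) = (2*(real n+1))*(2*real n+1)*fact (2*n)"
  proof -
    have "2*n+2 = Suc (Suc (2*n))" by simp
    hence "(fact (2*n+2) :: real) = fact (Suc (Suc (2*n)))" by simp
    also have "\<dots> = real (Suc (Suc (2*n))) * (real (Suc (2*n)) * fact (2*n))" by (simp only: fact_Suc)
    finally show ?thesis by (simp add: algebra_simps)
  qed
  have d: "(fact (n+1) :: real) = (real n+1) * fact n" by simp
  have r: "real (n+1) = real n + 1" by simp
  show ?thesis unfolding a b e c d r by (rule cb_aux) auto
qed

lemma aux_q0: fixes a B B' c d :: real assumes "a > 0" "B > 0" "c > 0" "d > 0" "B' * d = 2*c*B"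
  shows "2/(a*B) * (a/(2*c)) = 2/(d*B')"
proof -
  have "B' = 2*c*B/d" using assms by (simp add: field_simps)
  thus ?thesis using assms by (simp add: field_simps)
qed

lemma aux_q: fixes B B' x :: real assumes "B > 0" "x \<ge> 0" "B' * (x+2) = 2*(2*x+3)*B"
  shows "2/((x+1)*B) * ((x+1)/(2*(2*x+3))) = 2/((x+2)*B')"
  by (rule aux_q0) (use assms in auto)

lemma binom_pos: "real ((2*n+2) choose (n+1)) > 0"
proof -
  have "n+1 \<le> 2*n+2" by simp
  hence "0 < (2*n+2) choose (n+1)" by (simp only: zero_less_binomial_iff)
  thus ?thesis by (simp only: of_nat_0_less_iff)
qed

lemma t0_Qp: "t0 (Qp n) = 2 / ((real n+1) * real ((2*n+2) choose (n+1)))"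
proof (induction n)
  case 0 thus ?case by (simp add: Qp_def)
next
  case (Suc n)
  have "t0 (Qp (Suc n)) = t0 (Qp n) * aq (Suc n)" by (simp add: Qp_def qf_def)
  also have "aq (Suc n) = (real n + 1)/(2*(2*real n+3))" unfolding aq_def by (simp add: algebra_simps)
  also have "t0 (Qp n) * ((real n + 1)/(2*(2*real n+3))) = 2/((real n+2) * real ((2*Suc n+2) choose (Suc n+1)))"
    unfolding Suc.IH
  proof (rule aux_q[OF binom_pos])
    have e1: "2*Suc n = 2*n+2" "Suc n = n+1" by simp_all
    have "real ((2*Suc n+2) choose (Suc n+1)) * real (Suc n+1) = 2*(2*real (Suc n)+1) * real ((2*Suc n) choose Suc n)"
      by (rule cb)
    thus "real ((2*Suc n+2) choose (Suc n+1)) * (real n+2) = 2*(2*real n+3) * real ((2*n+2) choose (n+1))"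
      unfolding e1 by (simp add: algebra_simps del: binomial_Suc_Suc)
  qed simp
  also have "real n + 2 = real (Suc n) + 1" by simp
  finally show ?case .
qed

lemma delta_aux: fixes B H y :: real assumes "B > 0" "y > 0"
  shows "3*H*(2/(y*B))*(3/(2*y)) = 9*(H/(B*y^2))"
  using assms by (simp add: field_simps power2_eq_square)

lemma delta_eq: "3 * Hp 4 n * t0 (Qp n) * t0 (Vv (Suc n)) = 9 * delta_term (Suc n)"
proof -
  have e: "2 * Suc n = 2*n+2" "Suc n = n+1" by simp_all
  have v: "t0 (Vv (Suc n)) = 3/(2*(real n+1))" by (simp add: Vv_def)
  have d: "delta_term (Suc n) = Hp 4 n / (real ((2*n+2) choose (n+1)) * (real n+1)^2)"
    unfolding delta_term_def e by simp
  show ?thesis unfolding t0_Qp v d by (rule delta_aux[OF binom_pos]) (simp add: add_pos_nonneg)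
qed

lemma v4: "(vector [a,b,c,d] :: 'a::zero^4) $ 1 = a" "(vector [a,b,c,d] :: 'a::zero^4) $ 2 = b"
  "(vector [a,b,c,d] :: 'a::zero^4) $ 3 = c" "(vector [a,b,c,d] :: 'a::zero^4) $ 4 = d"
  by (simp_all add: vector_def)

definition toM :: "tr \<Rightarrow> tr \<Rightarrow> real^4^4" where
 "toM X w = vector [vector [t0 X, t1 X, t2 X, t2 w], vector [0, t0 X, t1 X, t1 w],
                    vector [0, 0, t0 X, t0 w], vector [0, 0, 0, 1]]"

lemma toM_mult: "matrix_matrix_mult (toM P1 u1) (toM P2 u2) = toM (P1*P2) (u1 + P1*u2)"
  unfolding toM_def matrix_matrix_mult_def
  by (simp add: vec_eq_iff forall_4 sum_4 v4 algebra_simps)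

lemma mat1: "mat 1 = toM 1 0"
  unfolding toM_def mat_def by (simp add: vec_eq_iff forall_4 v4)

lemma Mmat_eq: assumes "n > 0" shows "Mmat n = toM (qf n) (Vv n)"
proof -
  have p: "real n > 0" using assms by simp
  have gen: "\<And>x y::real. x > 0 \<Longrightarrow> y > 0 \<Longrightarrow> -3/(2*x*y) = -3*(x/(2*y))/x^2"
    by (simp add: field_simps power2_eq_square)
  have b: "- 3 / (2 * real n * (2 * real n + 1)) = -3 * aq n / real n^2"
    unfolding aq_def using p by (intro gen) auto
  show ?thesis unfolding Mmat_def Let_def toM_def qf_def Vv_def b by (simp add: aq_def)
qed

definition wN :: "nat \<Rightarrow> tr" where "wN N = (\<Sum>n<N. Qp n * Vv (Suc n))"

lemma Mprod_eq: "Mprod N = toM (Qp N) (wN N)"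
proof (induction N)
  case 0 thus ?case by (simp add: mat1 Qp_def wN_def)
next
  case (Suc N)
  have "Mprod (Suc N) = matrix_matrix_mult (toM (Qp N) (wN N)) (toM (qf (Suc N)) (Vv (Suc N)))"
    by (simp add: Suc.IH Mmat_eq)
  also have "\<dots> = toM (Qp (Suc N)) (wN (Suc N))"
    unfolding toM_mult by (simp add: Qp_def wN_def)
  finally show ?case .
qed

lemma vector4_tendsto:
  fixes f1 f2 f3 f4 :: "'b \<Rightarrow> 'a::{topological_space,zero}"
  assumes "(f1 \<longlongrightarrow> a1) F" "(f2 \<longlongrightarrow> a2) F" "(f3 \<longlongrightarrow> a3) F" "(f4 \<longlongrightarrow> a4) F"
  shows "((\<lambda>n. vector [f1 n, f2 n, f3 n, f4 n] :: 'a^4) \<longlongrightarrow> vector [a1, a2, a3, a4]) F"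
proof (rule vec_tendstoI)
  fix i :: 4
  show "((\<lambda>n. vector [f1 n, f2 n, f3 n, f4 n] $ i) \<longlongrightarrow> (vector [a1, a2, a3, a4] :: 'a^4) $ i) F"
    using exhaust_4[of i] assms by (auto simp: v4)
qed

lemma toM_tendsto:
  assumes "(\<lambda>n. t0 (X n)) \<longlonglongrightarrow> t0 x" "(\<lambda>n. t1 (X n)) \<longlonglongrightarrow> t1 x" "(\<lambda>n. t2 (X n)) \<longlonglongrightarrow> t2 x"
    "(\<lambda>n. t0 (w n)) \<longlonglongrightarrow> t0 y" "(\<lambda>n. t1 (w n)) \<longlonglongrightarrow> t1 y" "(\<lambda>n. t2 (w n)) \<longlonglongrightarrow> t2 y"
  shows "(\<lambda>n. toM (X n) (w n)) \<longlonglongrightarrow> toM x y"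
  unfolding toM_def
  by (intro vector4_tendsto assms tendsto_const)

lemma dm_qf: "m > 0 \<Longrightarrow> dm (3/real m^2) (qf m)"
  by (simp add: dm_def qf_def aq_def abs_mult ac_simps)

lemma Qp_dom: "dm 6 (Qp n)"
proof -
  have h: "\<And>m. dm (3/real (m+1)^2) (qf (m+1))" by (intro dm_qf) simp
  have a: "dm (\<Sum>m<n. 3/real (m+1)^2) (Qp n)"
    unfolding Qp_def by (intro dm_prod) (use h in auto)
  have b: "(\<Sum>m<n. 3/real (m+1)^2) = 3 * (\<Sum>m<n. 1/(real m+1)^2)"
    by (simp add: sum_distrib_left add.commute)
  have c: "0 \<le> (\<Sum>m<n. 3/real (m+1)^2)" by (intro sum_nonneg) simp
  show ?thesis by (rule dm_mono[OF a c]) (use b sum_sq_bound[of n] in linarith)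
qed

lemma t0_Qp_le: "t0 (Qp n) \<le> (1/4)^n"
proof -
  have "t0 (Qp n) = (\<Prod>m<n. aq (m+1))" by (simp add: Qp_def t0_prod qf_def)
  also have "\<dots> \<le> (\<Prod>m<n. 1/4)"
    by (intro prod_mono) (auto simp: aq_def field_simps)
  finally show ?thesis by simp
qed

lemma Qp_lim: "(\<lambda>n. tc (Qp n) i) \<longlonglongrightarrow> 0"
proof (rule Lim_null_comparison)
  have "\<bar>tc (Qp n) i\<bar> \<le> 36 * (1/4)^n" for n
  proof -
    have "\<bar>tc (Qp n) i\<bar> \<le> 6^2 * t0 (Qp n)" by (rule dm_tc[OF Qp_dom]) auto
    also have "\<dots> \<le> 6^2 * (1/4)^n" by (intro mult_left_mono t0_Qp_le) auto
    finally show ?thesis by simp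
  qed
  thus "\<forall>\<^sub>F n in sequentially. norm (tc (Qp n) i) \<le> 36 * (1/4)^n" by simp
  show "(\<lambda>n. 36 * (1/4::real)^n) \<longlonglongrightarrow> 0"
    by (intro tendsto_mult_right_zero LIMSEQ_power_zero) simp
qed

lemma delta_term_Suc: "delta_term (Suc n) = Hp 4 n * t0 (Qp n) * (1/(2*(real n+1)))"
proof -
  have "9 * delta_term (Suc n) = 3 * Hp 4 n * t0 (Qp n) * t0 (Vv (Suc n))" by (rule delta_eq[symmetric])
  also have "t0 (Vv (Suc n)) = 3/(2*(real n+1))" by (simp add: Vv_def)
  finally show ?thesis by simp
qed

lemma Hp_bounds: "0 \<le> Hp 4 n \<and> Hp 4 n \<le> real n"
proof -
  have "Hp 4 n \<le> of_nat (card {1..n}) * 1" unfolding Hp_def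
    by (rule sum_bounded_above) (auto simp: field_simps)
  moreover have "0 \<le> Hp 4 n" unfolding Hp_def by (intro sum_nonneg) simp
  ultimately show ?thesis by simp
qed

lemma delta_bounds: "0 \<le> delta_term (Suc n) \<and> delta_term (Suc n) \<le> (1/4)^n"
proof -
  have h: "0 \<le> Hp 4 n" "Hp 4 n \<le> real n" using Hp_bounds by auto
  have q: "0 \<le> t0 (Qp n)" using Qp_dom by (simp add: dm_def)
  have f: "Hp 4 n * (1/(2*(real n+1))) \<le> 1"
  proof -
    have "Hp 4 n * (1/(2*(real n+1))) \<le> (real n + 1) * (1/(2*(real n+1)))"
      using h by (intro mult_right_mono) auto
    also have "\<dots> \<le> 1" by simp
    finally show ?thesis .
  qed
  have "delta_term (Suc n) = t0 (Qp n) * (Hp 4 n * (1/(2*(real n+1))))"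
    unfolding delta_term_Suc by (simp add: ac_simps)
  also have "\<dots> \<le> t0 (Qp n) * 1" using q f by (intro mult_left_mono) auto
  also have "\<dots> \<le> (1/4)^n" using t0_Qp_le by simp
  finally show ?thesis unfolding delta_term_Suc using h q by simp
qed

lemma delta_summable: "summable (\<lambda>n. delta_term (n + 1))"
proof (rule summable_comparison_test)
  show "\<exists>N. \<forall>n\<ge>N. norm (delta_term (n + 1)) \<le> (1/4::real)^n"
    using delta_bounds by auto
  show "summable (\<lambda>n. (1/4::real)^n)" by (rule summable_geometric) simp
qed

lemma delta_pos: "delta > 0"
proof -
  have "0 < delta_term (Suc 1)"
  proof -
    have "Hp 4 1 = 1" by (simp add: Hp_def)
    moreover have "delta_term (Suc 1) = Hp 4 1 / (real ((2*1+2) choose (1+1)) * (real 1+1)^2)"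
      unfolding delta_term_def by simp
    ultimately show ?thesis using binom_pos[of 1] by simp
  qed
  hence "0 < suminf (\<lambda>n. delta_term (n + 1))"
    by (intro suminf_pos2[OF delta_summable]) (use delta_bounds in auto)
  thus ?thesis unfolding delta_def by simp
qed

lemma tc_QV: "tc (Qp n * Vv (Suc n)) i = tc (G n 1) i + (if i < 2 then 0 else 9 * delta_term (n+1))"
  using tc_G1[of n i] delta_eq[of n] by auto

lemma tc_wN: "tc (wN N) i = (Rs i 0 - Rs i N) + (if i < 2 then 0 else 9 * (\<Sum>n<N. delta_term (n+1)))"
proof -
  have "tc (wN N) i = (\<Sum>n<N. tc (G n 1) i + (if i < 2 then 0 else 9 * delta_term (n+1)))"
    unfolding wN_def tc_sum tc_QV ..
  also have "\<dots> = (\<Sum>n<N. tc (G n 1) i) + (if i < 2 then 0 else 9 * (\<Sum>n<N. delta_term (n+1)))"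
    by (simp add: sum.distrib sum_distrib_left)
  finally show ?thesis unfolding Rs_tel .
qed

lemma wN_lim: "(\<lambda>N. tc (wN N) i) \<longlonglongrightarrow> Rs i 0 + (if i < 2 then 0 else 9 * (\<Sum>n. delta_term (n+1)))"
proof (cases "i < 2")
  case True
  have "(\<lambda>N. Rs i 0 - Rs i N) \<longlonglongrightarrow> Rs i 0 - 0"
    by (intro tendsto_diff tendsto_const Rs_lim)
  thus ?thesis unfolding tc_wN using True by simp
next
  case False
  have "(\<lambda>N. (Rs i 0 - Rs i N) + 9 * (\<Sum>n<N. delta_term (n+1))) \<longlonglongrightarrow> (Rs i 0 - 0) + 9 * (\<Sum>n. delta_term (n+1))"
    by (intro tendsto_add tendsto_diff tendsto_const Rs_lim tendsto_mult summable_LIMSEQ delta_summable)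
  thus ?thesis unfolding tc_wN using False by simp
qed

theorem mainTheorem5:
  shows "summable (\<lambda>n. delta_term (n + 1))
    \<and> Mprod \<longlonglongrightarrow>
        (vector [vector [0, 0, 0, zeta_nat 6 + delta],
                 vector [0, 0, 0, zeta_nat 4],
                 vector [0, 0, 0, zeta_nat 2],
                 vector [0, 0, 0, 1]] :: real^4^4)
    \<and> delta > 0"
proof (intro conjI delta_summable delta_pos)
  have target: "(vector [vector [0, 0, 0, zeta_nat 6 + delta],
                 vector [0, 0, 0, zeta_nat 4],
                 vector [0, 0, 0, zeta_nat 2],
                 vector [0, 0, 0, 1]] :: real^4^4) = toM 0 (T (zeta_nat 2) (zeta_nat 4) (zeta_nat 6 + delta))"
    unfolding toM_def by simp
  have M: "Mprod = (\<lambda>N. toM (Qp N) (wN N))" by (rule ext) (rule Mprod_eq)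
  have q: "(\<lambda>n. tc (Qp n) i) \<longlonglongrightarrow> 0" for i by (rule Qp_lim)
  have w0: "(\<lambda>n. t0 (wN n)) \<longlonglongrightarrow> zeta_nat 2"
    using wN_lim[of 0] by (simp add: tc_def Rs0)
  have w1: "(\<lambda>n. t1 (wN n)) \<longlonglongrightarrow> zeta_nat 4"
    using wN_lim[of 1] Rs0(2) by (simp add: tc_def)
  have w2: "(\<lambda>n. t2 (wN n)) \<longlonglongrightarrow> zeta_nat 6 + delta"
    using wN_lim[of 2] by (simp add: tc_def Rs0 delta_def)
  show "Mprod \<longlonglongrightarrow>
        (vector [vector [0, 0, 0, zeta_nat 6 + delta],
                 vector [0, 0, 0, zeta_nat 4],
                 vector [0, 0, 0, zeta_nat 2],
                 vector [0, 0, 0, 1]] :: real^4^4)"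
    unfolding target M
    by (rule toM_tendsto) (use q[of 0] q[of 1] q[of 2] w0 w1 w2 in \<open>simp_all add: tc_def\<close>)
qed

end
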